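(* Let $D,W,N_0,\zeta,P_A,h,g>0$ and $\gamma=\frac{g\zeta P_A h}{WN_0}$. Consider the problem: minimize $\tau_0+\tau_S$ over $\tau_0,\tau_S,P\ge 0$ subject to $P\tau_S\le \zeta P_A h\tau_0$ and $\tau_S W\log_2\left(1+\frac{Pg}{WN_0}\right)\ge D$. Its optimal solution has $$\dot\tau_S=\frac{D\ln 2}{W\alpha},\qquad \dot\tau_0=\frac{D\ln 2}{W\alpha\gamma}\left(2^{\alpha/\ln 2}-1\right),$$ where $\alpha=\mathbb{L}_0\!\left(\frac{\gamma-1}{e}\right)+1$ and $\mathbb{L}_0$ is the principal (branch $0$) Lambert W function.
   Context: Single source wireless powered network without a maximum transmit power constraint: the source harvests energy $\zeta P_A h\tau_0$ during time $\tau_0$ and then transmits $D$ bits with power $P$ during time $\tau_S$ over an AWGN channel with gain $g$, bandwidth $W$ and noise spectral density $N_0$. *)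

theory Defs
  imports Complex_Main
begin

text \<open>Principal branch of the Lambert W function: for x \<ge> -1/e, the unique w \<ge> -1 with w e^w = x.\<close>
definition lambertW0 :: "real \<Rightarrow> real" where
  "lambertW0 x = (THE w. w \<ge> -1 \<and> w * exp w = x)"

definition feasible :: "real \<Rightarrow> real \<Rightarrow> real \<Rightarrow> real \<Rightarrow> real \<Rightarrow> real \<Rightarrow> real \<Rightarrow> real \<Rightarrow> real
    \<Rightarrow> real \<Rightarrow> bool" where
  "feasible D W N0 \<zeta> PA h g \<tau>0 \<tau>S P \<longleftrightarrow>
     \<tau>0 \<ge> 0 \<and> \<tau>S \<ge> 0 \<and> P \<ge> 0 \<and>
     P * \<tau>S \<le> \<zeta> * PA * h * \<tau>0 \<and>
     \<tau>S * W * log 2 (1 + P * g / (W * N0)) \<ge> D"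

definition optimal :: "real \<Rightarrow> real \<Rightarrow> real \<Rightarrow> real \<Rightarrow> real \<Rightarrow> real \<Rightarrow> real \<Rightarrow> real \<Rightarrow> real
    \<Rightarrow> real \<Rightarrow> bool" where
  "optimal D W N0 \<zeta> PA h g \<tau>0 \<tau>S P \<longleftrightarrow>
     feasible D W N0 \<zeta> PA h g \<tau>0 \<tau>S P \<and>
     (\<forall>t0 tS Q. feasible D W N0 \<zeta> PA h g t0 tS Q \<longrightarrow> \<tau>0 + \<tau>S \<le> t0 + tS)"

end

theory Submission
  imports Defs
begin

lemma exp_strict_tangent:
  fixes y :: real assumes "y \<noteq> 0" shows "1 + y < exp y"
proof (cases "1 + y/2 \<ge> 0")
  case True
  have "exp y = exp (y/2) * exp (y/2)" by (simp flip: exp_add)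
  also have "\<dots> \<ge> (1 + y/2) * (1 + y/2)"
    using exp_ge_add_one_self[of "y/2"] True by (intro mult_mono) auto
  finally have "exp y \<ge> 1 + y + y*y/4" by (simp add: algebra_simps)
  moreover have "y*y > 0" using assms not_real_square_gt_zero by blast
  ultimately show ?thesis by linarith
next
  case False
  then have "1 + y < 0" by linarith
  then show ?thesis using exp_gt_zero[of y] by linarith
qed

lemma wexp_mono:
  fixes a b :: real assumes "-1 \<le> a" "a < b" shows "a * exp a < b * exp b"
proof (rule DERIV_pos_imp_increasing_open[OF assms(2)])
  fix x assume "a < x" "x < b"
  then show "\<exists>y. DERIV (\<lambda>w. w * exp w) x :> y \<and> y > 0"
    using assms by (intro exI[of _ "exp x + x * exp x"]) (auto intro!: derivative_eq_intros simp: algebra_simps add_pos_pos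
       intro: mult_pos_pos[of "1+x" "exp x", simplified distrib_right, simplified])
next
  show "continuous_on {a..b} (\<lambda>w. w * exp w)" by (intro continuous_intros)
qed

lemma lambertW0_props:
  fixes y :: real assumes "y > - exp (-1)"
  shows "lambertW0 y \<ge> -1 \<and> lambertW0 y * exp (lambertW0 y) = y"
proof -
  let ?f = "\<lambda>w::real. w * exp w"
  have "\<exists>w. -1 \<le> w \<and> w \<le> max 0 y \<and> ?f w = y"
  proof (rule IVT)
    show "?f (-1) \<le> y" using assms by simp
    show "y \<le> ?f (max 0 y)"
    proof (cases "y \<le> 0")
      case True then show ?thesis by (simp add: max_def)
    next
      case False
      then have "1 \<le> exp y" by simp
      then have "y * 1 \<le> y * exp y" using False by (intro mult_left_mono) auto
      then show ?thesis using False by (simp add: max_def)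
    qed
    show "- 1 \<le> max 0 y" by simp
    show "\<forall>x. - 1 \<le> x \<and> x \<le> max 0 y \<longrightarrow> isCont ?f x" by (auto intro!: continuous_intros)
  qed
  then obtain w where w: "-1 \<le> w" "?f w = y" by auto
  have "(THE w. w \<ge> -1 \<and> w * exp w = y) = w"
  proof (rule the_equality)
    show "- 1 \<le> w \<and> w * exp w = y" using w by simp
    fix v assume v: "- 1 \<le> v \<and> v * exp v = y"
    show "v = w"
    proof (rule ccontr)
      assume "v \<noteq> w"
      then have "v < w \<or> w < v" by linarith
      then show False using wexp_mono[of v w] wexp_mono[of w v] v w by auto
    qed
  qed
  then show ?thesis unfolding lambertW0_def using w by simp
qed



lemma lb:
  fixes D W c k \<gamma> \<alpha> t0 tS Q :: real
  assumes "W > 0" "D > 0" "c > 0" "k > 0" "\<gamma> = k * c" "\<alpha> > 0"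
    and eq: "exp \<alpha> + \<gamma> - 1 = \<alpha> * exp \<alpha>"
    and f: "t0 \<ge> 0" "tS \<ge> 0" "Q \<ge> 0" "Q * tS \<le> c * t0" "tS * W * log 2 (1 + Q * k) \<ge> D"
  shows "\<gamma> * (t0 + tS) \<ge> D * ln 2 * exp \<alpha> / W \<and>
    (\<gamma> * (t0 + tS) = D * ln 2 * exp \<alpha> / W \<longrightarrow> tS = D * ln 2 / (W * \<alpha>) \<and> \<gamma> * t0 = tS * (exp \<alpha> - 1))"
proof -
  have tS: "tS > 0"
  proof (rule ccontr)
    assume "\<not> tS > 0" then have "tS = 0" using f by linarith
    then show False using f assms by simp
  qed
  define x where "x = D * ln 2 / (W * tS)"
  have xpos: "x > 0" unfolding x_def using tS assms by simp
  have l2: "ln 2 > (0::real)" by simp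
  have "log 2 (1 + Q * k) \<ge> D / (W * tS)"
    using f(5) tS assms by (simp add: field_simps mult.commute mult.left_commute)
  then have "ln (1 + Q * k) / ln 2 \<ge> D / (W * tS)" by (simp add: log_def)
  then have "ln (1 + Q * k) \<ge> x" unfolding x_def using l2 by (simp add: field_simps)
  moreover have "1 + Q * k > 0" using f assms by (simp add: add_pos_nonneg)
  ultimately have "exp x \<le> 1 + Q * k"
    by (metis exp_le_cancel_iff exp_ln)
  then have h1: "k * Q * tS \<ge> tS * (exp x - 1)" using tS
    by (smt (verit, best) mult.commute mult_right_mono)
  have h2: "\<gamma> * t0 \<ge> k * Q * tS" using f(4) assms
    by (metis mult.assoc mult_left_mono less_imp_le)
  have tan: "exp x \<ge> exp \<alpha> * (1 + (x - \<alpha>))"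
    using exp_ge_add_one_self[of "x - \<alpha>"] by (simp add: exp_diff field_simps)
  have key: "exp x + \<gamma> - 1 \<ge> exp \<alpha> * x" using tan eq by (simp add: algebra_simps)
  have xt: "tS * x = D * ln 2 / W" unfolding x_def using tS assms by (simp add: field_simps)
  have main: "\<gamma> * (t0 + tS) \<ge> tS * (exp x + \<gamma> - 1)" using h1 h2 by (simp add: algebra_simps)
  have tx: "tS * (exp \<alpha> * x) = D * ln 2 * exp \<alpha> / W"
  proof -
    have "tS * (exp \<alpha> * x) = (tS * x) * exp \<alpha>" by simp
    also have "\<dots> = D * ln 2 * exp \<alpha> / W" using xt by simp
    finally show ?thesis .
  qed
  have "tS * (exp x + \<gamma> - 1) \<ge> tS * (exp \<alpha> * x)" using key tS by simp
  also note tx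
  finally have A: "\<gamma> * (t0 + tS) \<ge> D * ln 2 * exp \<alpha> / W" using main by linarith
  moreover have "tS = D * ln 2 / (W * \<alpha>) \<and> \<gamma> * t0 = tS * (exp \<alpha> - 1)"
    if E: "\<gamma> * (t0 + tS) = D * ln 2 * exp \<alpha> / W"
  proof -
    have xa: "x = \<alpha>"
    proof (rule ccontr)
      assume "x \<noteq> \<alpha>"
      then have "exp x > exp \<alpha> * (1 + (x - \<alpha>))"
        using exp_strict_tangent[of "x - \<alpha>"] by (simp add: exp_diff field_simps)
      then have "exp x + \<gamma> - 1 > exp \<alpha> * x" using eq by (simp add: algebra_simps)
      then have "tS * (exp x + \<gamma> - 1) > tS * (exp \<alpha> * x)" using tS by simp
      then show False using E main tx by linarith
    qed
    then have "tS = D * ln 2 / (W * \<alpha>)" unfolding x_def using tS assms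
      by (auto simp: field_simps)
    moreover have "\<gamma> * t0 = tS * (exp \<alpha> - 1)"
    proof -
      have g1: "\<gamma> * tS = tS * (\<alpha> * exp \<alpha>) - tS * exp \<alpha> + tS"
        using arg_cong[OF eq, of "\<lambda>z. tS * z"] by (simp add: algebra_simps)
      have g2: "tS * (\<alpha> * exp \<alpha>) = D * ln 2 * exp \<alpha> / W" using tx xa by (simp add: mult.commute)
      have g3: "\<gamma> * (t0 + tS) = \<gamma> * t0 + \<gamma> * tS" by (simp add: algebra_simps)
      have g4: "tS * (exp \<alpha> - 1) = tS * exp \<alpha> - tS" by (simp add: algebra_simps)
      show ?thesis using E g1 g2 g3 g4 h1 h2 xa by linarith
    qed
    ultimately show ?thesis by simp
  qed
  ultimately show ?thesis by blast
qed


theorem lemma2: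
  fixes D W N0 \<zeta> PA h g \<gamma> \<alpha> :: real
  assumes "D > 0" "W > 0" "N0 > 0" "\<zeta> > 0" "PA > 0" "h > 0" "g > 0"
    and "\<gamma> = g * \<zeta> * PA * h / (W * N0)"
    and "\<alpha> = lambertW0 ((\<gamma> - 1) / exp 1) + 1"
  shows "(\<exists>\<tau>0 \<tau>S P. optimal D W N0 \<zeta> PA h g \<tau>0 \<tau>S P) \<and>
         (\<forall>\<tau>0 \<tau>S P. optimal D W N0 \<zeta> PA h g \<tau>0 \<tau>S P \<longrightarrow>
            \<tau>S = D * ln 2 / (W * \<alpha>) \<and>
            \<tau>0 = D * ln 2 / (W * \<alpha> * \<gamma>) * (2 powr (\<alpha> / ln 2) - 1))"
proof -
  define c where "c = \<zeta> * PA * h"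
  define k where "k = g / (W * N0)"
  have c: "c > 0" unfolding c_def using assms by simp
  have k: "k > 0" unfolding k_def using assms by simp
  have gk: "\<gamma> = k * c" unfolding k_def c_def assms(8) by (simp add: field_simps)
  have gpos: "\<gamma> > 0" using gk c k by simp
  define L where "L = lambertW0 ((\<gamma> - 1) / exp 1)"
  have "(\<gamma> - 1) / exp 1 > - exp (-1)" using gpos by (simp add: exp_minus field_simps)
  from lambertW0_props[OF this] have L: "L \<ge> -1" "L * exp L = (\<gamma> - 1) / exp 1"
    unfolding L_def by auto
  have al: "\<alpha> = L + 1" unfolding L_def assms(9) by simp
  have eL: "exp L = exp \<alpha> / exp 1" unfolding al by (simp add: exp_add)
  have eq0: "(\<alpha> - 1) * exp \<alpha> = \<gamma> - 1" using L(2) unfolding eL al by (simp add: field_simps)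
  have eq: "exp \<alpha> + \<gamma> - 1 = \<alpha> * exp \<alpha>" using eq0 by (simp add: algebra_simps)
  have apos: "\<alpha> > 0"
  proof (rule ccontr)
    assume "\<not> \<alpha> > 0" then have "\<alpha> = 0" using L(1) al by linarith
    then show False using eq0 gpos by simp
  qed
  have feas_c: "feasible D W N0 \<zeta> PA h g t0 tS Q \<longleftrightarrow>
      t0 \<ge> 0 \<and> tS \<ge> 0 \<and> Q \<ge> 0 \<and> Q * tS \<le> c * t0 \<and> tS * W * log 2 (1 + Q * k) \<ge> D"
    for t0 tS Q unfolding feasible_def c_def k_def by (simp add: mult.assoc)
  define T where "T = D * ln 2 * exp \<alpha> / W"
  have LB: "\<gamma> * (t0 + tS) \<ge> T \<and>
    (\<gamma> * (t0 + tS) = T \<longrightarrow> tS = D * ln 2 / (W * \<alpha>) \<and> \<gamma> * t0 = tS * (exp \<alpha> - 1))"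
    if "feasible D W N0 \<zeta> PA h g t0 tS Q" for t0 tS Q
    unfolding T_def using that[unfolded feas_c] lb[OF assms(2,1) c k gk apos eq] by blast
  define S where "S = D * ln 2 / (W * \<alpha>)"
  define P where "P = (exp \<alpha> - 1) / k"
  define Z where "Z = P * S / c"
  have Spos: "S > 0" unfolding S_def using assms apos by simp
  have Ppos: "P \<ge> 0" unfolding P_def using apos k by simp
  have Zpos: "Z \<ge> 0" unfolding Z_def using Spos Ppos c by simp
  have "1 + P * k = exp \<alpha>" unfolding P_def using k by simp
  then have lg: "log 2 (1 + P * k) = \<alpha> / ln 2" by (simp add: log_def)
  have "S * W * log 2 (1 + P * k) = D" unfolding lg S_def using apos assms(1,2) by (simp add: field_simps)
  then have FZ: "feasible D W N0 \<zeta> PA h g Z S P"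
    unfolding feas_c using Spos Ppos Zpos c unfolding Z_def by simp
  have gZ: "\<gamma> * Z = S * (exp \<alpha> - 1)" unfolding Z_def P_def gk using c k by (simp add: field_simps)
  have "\<gamma> * (Z + S) = S * (exp \<alpha> + \<gamma> - 1)" using gZ by (simp add: algebra_simps)
  also have "\<dots> = S * \<alpha> * exp \<alpha>" using eq by simp
  also have "\<dots> = T" unfolding S_def T_def using apos assms(1,2) by (simp add: field_simps)
  finally have ZT: "\<gamma> * (Z + S) = T" .
  have optZ: "optimal D W N0 \<zeta> PA h g Z S P"
    unfolding optimal_def
  proof (intro conjI allI impI FZ)
    fix t0 tS Q assume "feasible D W N0 \<zeta> PA h g t0 tS Q"
    then have "\<gamma> * (t0 + tS) \<ge> \<gamma> * (Z + S)" using LB ZT by auto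
    then show "Z + S \<le> t0 + tS" using gpos by simp
  qed
  have p2: "2 powr (\<alpha> / ln 2) = exp \<alpha>" by (simp add: powr_def)
  show ?thesis
  proof (intro conjI exI allI impI)
    show "optimal D W N0 \<zeta> PA h g Z S P" by (rule optZ)
  next
    fix t0 tS Q assume o: "optimal D W N0 \<zeta> PA h g t0 tS Q"
    then have F: "feasible D W N0 \<zeta> PA h g t0 tS Q" and "t0 + tS \<le> Z + S"
      using FZ unfolding optimal_def by auto
    then have "\<gamma> * (t0 + tS) \<le> \<gamma> * (Z + S)" using gpos by simp
    then have "\<gamma> * (t0 + tS) = T" using LB[OF F] ZT by linarith
    then have R: "tS = S" "\<gamma> * t0 = S * (exp \<alpha> - 1)" using LB[OF F] unfolding S_def by auto
    show "tS = D * ln 2 / (W * \<alpha>)" using R S_def by simp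
    show "t0 = D * ln 2 / (W * \<alpha> * \<gamma>) * (2 powr (\<alpha> / ln 2) - 1)"
      unfolding p2 using R(2) gpos apos assms(2) unfolding S_def by (simp add: field_simps)
  qed
qed

end
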